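(* Let $q$ be a prime power, $k \ge 2$, $n = (q^k-1)/(q-1)$, and let $\mathcal{C} \subseteq \mathbb{F}_q^n$ be the $q$-ary simplex code of dimension $k$. Then $$\mathbb{E}[\mathcal{C}] = k + \sum_{i=1}^{k} \frac{q^{i-1}-1}{q^k - q^{i-1}}.$$
   Context: The $q$-ary simplex code of dimension $k$ is the code generated by a $k \times n$ matrix whose columns are representatives of all nonzero vectors of $\mathbb{F}_q^k$ up to nonzero scalar multiples, one per class (so $n=(q^k-1)/(q-1)$). For a linear code $\mathcal{C}\subseteq\mathbb{F}_q^n$ of dimension $k$, $\mathbb{E}[\mathcal{C}]$ is defined as $\mathbb{E}[G]$ for any generator matrix $G\in\mathbb{F}_q^{k\times n}$ of $\mathcal{C}$ (this does not depend on the choice of $G$), where $\mathbb{E}[G]$ is the expected number of draws when columns of $G$ are drawn independently and uniformly at random from its $n$ columns (with repetition) until the drawn columns span $\mathbb{F}_q^k$. *)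

theory Defs
  imports "HOL-Analysis.Analysis"
begin

definition stop_count :: "'a::field^'n::finite^'k::finite \<Rightarrow> nat \<Rightarrow> nat" where
  "stop_count G t = card {js \<in> {..<t} \<rightarrow>\<^sub>E (UNIV :: 'n set).
       vec.span ((\<lambda>i. column (js i) G) ` {..<t}) = UNIV \<and>
       vec.span ((\<lambda>i. column (js i) G) ` {..<t - 1}) \<noteq> UNIV}"

text \<open>Expected number of independent uniform draws (with repetition) of columns of G
  until the drawn columns span F^k:  sum over t of t * P(T = t), where
  P(T = t) = stop_count G t / n^t.\<close>
definition expected_draws :: "'a::field^'n::finite^'k::finite \<Rightarrow> real" where
  "expected_draws G = (\<Sum>t. real t * (real (stop_count G t) / real CARD('n) ^ t))"

definition simplex_generator :: "'a::field^'n::finite^'k::finite \<Rightarrow> bool" where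
  "simplex_generator G \<longleftrightarrow>
     (\<forall>j. column j G \<noteq> 0) \<and>
     (\<forall>v::'a^'k. v \<noteq> 0 \<longrightarrow> (\<exists>!j. \<exists>c. c \<noteq> 0 \<and> v = c *s column j G))"

end

theory Submission
  imports Defs
begin


lemma card_span_pow:
  fixes S :: "('a::{finite,field}^'k) set"
  shows "card (vec.span S) = CARD('a) ^ vec.dim S"
proof -
  have fin: "finite S" by simp
  then show ?thesis
  proof (induction S rule: finite_induct)
    case empty
    then show ?case by simp
  next
    case (insert x S)
    show ?case
    proof (cases "x \<in> vec.span S")
      case True
      then show ?thesis using insert by (simp add: vec.span_redundant vec.dim_insert)
    next
      case False
      have img: "vec.span (insert x S) = (\<lambda>(c,w). c *s x + w) ` (UNIV \<times> vec.span S)"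
      proof
        show "vec.span (insert x S) \<subseteq> (\<lambda>(c,w). c *s x + w) ` (UNIV \<times> vec.span S)"
        proof
          fix y assume "y \<in> vec.span (insert x S)"
          then obtain c where c: "y - c *s x \<in> vec.span S" using vec.span_breakdown_eq by blast
          then show "y \<in> (\<lambda>(c,w). c *s x + w) ` (UNIV \<times> vec.span S)"
            by (intro image_eqI[of _ _ "(c, y - c *s x)"]) auto
        qed
      next
        show "(\<lambda>(c,w). c *s x + w) ` (UNIV \<times> vec.span S) \<subseteq> vec.span (insert x S)"
        proof clarsimp
          fix c w assume "w \<in> vec.span S"
          then have "w \<in> vec.span (insert x S)" by (meson subsetD subset_insertI vec.span_mono)
          moreover have "c *s x \<in> vec.span (insert x S)" by (simp add: vec.span_base vec.span_scale)
          ultimately show "c *s x + w \<in> vec.span (insert x S)" by (simp add: vec.span_add)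
        qed
      qed
      have inj: "inj_on (\<lambda>(c,w). c *s x + w) (UNIV \<times> vec.span S)"
      proof (rule inj_onI, clarsimp)
        fix c w c' w'
        assume w: "w \<in> vec.span S" and w': "w' \<in> vec.span S" and eq: "c *s x + w = c' *s x + w'"
        have e2: "(c - c') *s x = w' - w" using eq by (simp add: algebra_simps vector_sub_rdistrib)
        have "c = c'"
        proof (rule ccontr)
          assume "c \<noteq> c'"
          then have hh: "inverse (c - c') *s ((c - c') *s x) = x"
            by (metis vector_smult_assoc left_inverse right_minus_eq vector_smult_lid)
          then have "x = inverse (c - c') *s (w' - w)" using e2 hh by metis
          moreover have "inverse (c - c') *s (w' - w) \<in> vec.span S"
            using w w' by (simp add: vec.span_diff vec.span_scale)
          ultimately show False using False by simp
        qed
        then show "c = c' \<and> w = w'" using eq by simp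
      qed
      have "card (vec.span (insert x S)) = CARD('a) * card (vec.span S)"
        unfolding img by (simp add: card_image[OF inj] card_cartesian_product)
      then show ?thesis using insert False by (simp add: vec.dim_insert)
    qed
  qed
qed



lemma col_count:
  fixes G :: "'a::{finite,field}^'n::finite^'k::finite"
  assumes sg: "simplex_generator G"
  shows "(CARD('a) - 1) * card {j. column j G \<in> vec.span W} = card (vec.span W) - 1"
proof -
  define J where "J = {j. column j G \<in> vec.span W}"
  define f where "f = (\<lambda>(c::'a, j). c *s column j G)"
  have nz: "\<And>j. column j G \<noteq> 0" and un: "\<And>v::'a^'k. v \<noteq> 0 \<Longrightarrow> \<exists>!j. \<exists>c. c \<noteq> 0 \<and> v = c *s column j G"
    using sg unfolding simplex_generator_def by auto
  have "bij_betw f ((UNIV - {0}) \<times> J) (vec.span W - {0})"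
  proof (rule bij_betw_imageI)
    show "inj_on f ((UNIV - {0}) \<times> J)"
    proof (rule inj_onI)
      fix a b assume a: "a \<in> (UNIV - {0}) \<times> J" and b: "b \<in> (UNIV - {0}) \<times> J" and fab: "f a = f b"
      obtain c j where aa: "a = (c, j)" by (cases a)
      obtain c' j' where bb: "b = (c', j')" by (cases b)
      have c: "c \<noteq> 0" using a aa by simp
      have c': "c' \<noteq> 0" using b bb by simp
      have eq: "c *s column j G = c' *s column j' G" using fab aa bb by (simp add: f_def)
      have v0: "c *s column j G \<noteq> 0" using c nz by (simp add: vector_mul_eq_0)
      have "j = j'" using un[OF v0] eq c c' by blast
      moreover have "c = c'"
      proof -
        have "(c - c') *s column j G = 0" using eq \<open>j = j'\<close> by (simp add: vector_sub_rdistrib)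
        then show ?thesis using nz by (simp add: vector_mul_eq_0)
      qed
      ultimately show "a = b" using aa bb by simp
    qed
  next
    show "f ` ((UNIV - {0}) \<times> J) = vec.span W - {0}"
    proof
      show "f ` ((UNIV - {0}) \<times> J) \<subseteq> vec.span W - {0}"
        using nz by (auto simp: f_def J_def vec.span_scale vector_mul_eq_0)
    next
      show "vec.span W - {0} \<subseteq> f ` ((UNIV - {0}) \<times> J)"
      proof
        fix v assume v: "v \<in> vec.span W - {0}"
        then obtain j c where c: "c \<noteq> 0" and vj: "v = c *s column j G" using un by blast
        have "inverse c *s v = column j G" using c vj by (simp add: vector_smult_assoc)
        then have "column j G \<in> vec.span W" using v by (metis DiffD1 vec.span_scale)
        then show "v \<in> f ` ((UNIV - {0}) \<times> J)"
          using c vj by (intro image_eqI[of _ _ "(c, j)"]) (auto simp: f_def J_def)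
      qed
    qed
  qed
  then have "card (((UNIV::'a set) - {0}) \<times> J) = card (vec.span W - {0})" by (metis bij_betw_same_card)
  moreover have "card ((UNIV::'a set) - {0}) = CARD('a) - 1" by (simp add: card_Diff_singleton)
  moreover have "card (vec.span W - {0}) = card (vec.span W) - 1"
    by (simp add: card_Diff_singleton vec.span_zero)
  ultimately show ?thesis by (simp add: card_cartesian_product J_def)
qed



lemma step_sums:
  fixes x y :: "nat \<Rightarrow> real" and p M :: real
  assumes p0: "0 \<le> p" and p1: "p < 1" and xn: "\<And>t. 0 \<le> x t" and yn: "\<And>t. 0 \<le> y t"
    and x0: "x 0 = 0"
    and rec: "\<And>t. x (Suc t) = p * x t + (1 - p) * y t"
    and ys: "y sums 1" and yw: "(\<lambda>t. real t * y t) sums M"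
  shows "x sums 1 \<and> (\<lambda>t. real t * x t) sums (M + 1 / (1 - p))"
proof -
  have Y: "sum y {..<T} \<le> 1" for T
    using ys sum_le_suminf[of y "{..<T}"] yn by (auto simp: sums_iff)
  have YW: "(\<Sum>t<T. real t * y t) \<le> M" for T
    using yw sum_le_suminf[of "\<lambda>t. real t * y t" "{..<T}"] yn by (auto simp: sums_iff)
  have recS: "sum x {..<Suc T} = p * sum x {..<T} + (1 - p) * sum y {..<T}" for T
    by (subst sum.lessThan_Suc_shift) (simp add: x0 rec sum.distrib sum_distrib_left del: sum.lessThan_Suc)
  have "sum x {..<T} \<le> 1" for T
  proof -
    have "sum x {..<T} \<le> sum x {..<Suc T}" using xn by (simp)
    then have "(1 - p) * sum x {..<T} \<le> (1 - p) * sum y {..<T}" using recS[of T] by (simp add: algebra_simps)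
    then have "sum x {..<T} \<le> sum y {..<T}" using p1 by simp
    then show ?thesis using Y[of T] by simp
  qed
  then have sx: "summable x" using xn by (intro summableI_nonneg_bounded) auto
  define X where "X = suminf x"
  have xs: "x sums X" using sx X_def by (simp add: summable_sums)
  have "(\<lambda>t. x (Suc t)) sums (p * X + (1 - p) * 1)"
    unfolding rec by (intro sums_add sums_mult xs ys)
  then have "x sums (p * X + (1 - p) * 1)" using sums_Suc_iff[of x] x0 by simp
  then have "X = p * X + (1 - p)" using xs sums_unique2 by fastforce
  then have "(1 - p) * X = (1 - p) * 1" by (simp add: algebra_simps)
  then have X1: "X = 1" using p1 by (subst (asm) mult_cancel_left) simp
  have xs1: "x sums 1" using xs X1 by simp
  have recW: "(\<Sum>t<Suc T. real t * x t) = p * ((\<Sum>t<T. real t * x t) + sum x {..<T})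
      + (1 - p) * ((\<Sum>t<T. real t * y t) + sum y {..<T})" for T
  proof -
    have e1: "real (Suc t) * x (Suc t) = p * (real t * x t + x t) + (1 - p) * (real t * y t + y t)" for t
      by (simp add: rec algebra_simps)
    have "(\<Sum>t<Suc T. real t * x t) = (\<Sum>t<T. real (Suc t) * x (Suc t))"
      by (subst sum.lessThan_Suc_shift) simp
    also have "\<dots> = (\<Sum>t<T. p * (real t * x t + x t) + (1 - p) * (real t * y t + y t))"
      by (simp only: e1)
    also have "\<dots> = p * ((\<Sum>t<T. real t * x t) + sum x {..<T})
      + (1 - p) * ((\<Sum>t<T. real t * y t) + sum y {..<T})"
      by (simp only: sum.distrib sum_distrib_left[symmetric])
    finally show ?thesis .
  qed
  have XB: "sum x {..<T} \<le> 1" for T using \<open>\<And>T. sum x {..<T} \<le> 1\<close> .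
  have "(\<Sum>t<T. real t * x t) \<le> (p + (1 - p) * (M + 1)) / (1 - p)" for T
  proof -
    have "(\<Sum>t<T. real t * x t) \<le> (\<Sum>t<Suc T. real t * x t)" using xn by simp
    also have "\<dots> \<le> p * (\<Sum>t<T. real t * x t) + p + (1 - p) * (M + 1)"
    proof -
      have "p * sum x {..<T} \<le> p" using XB[of T] p0 by (simp add: mult_left_le)
      moreover have "(1 - p) * ((\<Sum>t<T. real t * y t) + sum y {..<T}) \<le> (1 - p) * (M + 1)"
        using Y[of T] YW[of T] p1 by (intro mult_left_mono) auto
      moreover have "p * ((\<Sum>t<T. real t * x t) + sum x {..<T}) = p * (\<Sum>t<T. real t * x t) + p * sum x {..<T}"
        by (rule distrib_left)
      ultimately show ?thesis unfolding recW by linarith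
    qed
    finally have "(1 - p) * (\<Sum>t<T. real t * x t) \<le> p + (1 - p) * (M + 1)" by (simp add: left_diff_distrib)
    then show ?thesis using p1 by (simp add: pos_le_divide_eq mult.commute)
  qed
  then have sw: "summable (\<lambda>t. real t * x t)" using xn by (intro summableI_nonneg_bounded) auto
  define WX where "WX = suminf (\<lambda>t. real t * x t)"
  have ws: "(\<lambda>t. real t * x t) sums WX" using sw WX_def by (simp add: summable_sums)
  have e: "(\<lambda>t. real (Suc t) * x (Suc t)) = (\<lambda>t. p * (real t * x t + x t) + (1 - p) * (real t * y t + y t))"
    by (simp add: rec algebra_simps)
  have "(\<lambda>t. real (Suc t) * x (Suc t)) sums (p * (WX + 1) + (1 - p) * (M + 1))"
    unfolding e by (intro sums_add sums_mult ws xs1 yw ys)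
  then have "(\<lambda>t. real t * x t) sums (p * (WX + 1) + (1 - p) * (M + 1))"
    using sums_Suc_iff[of "\<lambda>t. real t * x t"] by simp
  then have "WX = p * (WX + 1) + (1 - p) * (M + 1)" using ws sums_unique2 by fastforce
  then have "(1 - p) * WX = (1 - p) * M + 1" by (simp add: algebra_simps)
  moreover have "(1 - p) * (M + 1 / (1 - p)) = (1 - p) * M + 1" using p1 by (simp add: distrib_left)
  ultimately have "(1 - p) * WX = (1 - p) * (M + 1 / (1 - p))" by simp
  then have "WX = M + 1 / (1 - p)" using p1 by (subst (asm) mult_cancel_left) simp
  then show ?thesis using xs1 ws by simp
qed



definition colset :: "'a::field^'n::finite^'k::finite \<Rightarrow> 'n list \<Rightarrow> ('a^'k) set" where
  "colset G xs = (\<lambda>j. column j G) ` set xs"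

definition SCL :: "'a::field^'n::finite^'k::finite \<Rightarrow> ('a^'k) set \<Rightarrow> nat \<Rightarrow> nat" where
  "SCL G W t = card {xs. length xs = t \<and> vec.span (W \<union> colset G xs) = UNIV \<and>
      (xs = [] \<or> vec.span (W \<union> colset G (butlast xs)) \<noteq> UNIV)}"

lemma SCL_full:
  fixes G :: "'a::field^'n::finite^'k::finite"
  assumes "vec.span W = UNIV"
  shows "SCL G W t = (if t = 0 then 1 else 0)"
proof (cases t)
  case 0
  have "{xs. length xs = t \<and> vec.span (W \<union> colset G xs) = UNIV \<and>
      (xs = [] \<or> vec.span (W \<union> colset G (butlast xs)) \<noteq> UNIV)} = {[]}"
    using assms 0 by (auto simp: colset_def)
  then show ?thesis using 0 by (simp add: SCL_def)
next
  case (Suc m)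
  have "vec.span (W \<union> S) = UNIV" for S
    using assms vec.span_mono[of W "W \<union> S"] by auto
  then have e: "{xs. length xs = t \<and> vec.span (W \<union> colset G xs) = UNIV \<and>
      (xs = [] \<or> vec.span (W \<union> colset G (butlast xs)) \<noteq> UNIV)} = {}"
    using Suc by auto
  show ?thesis unfolding SCL_def e using Suc by simp
qed

lemma SCL_rec:
  fixes G :: "'a::field^'n::finite^'k::finite"
  assumes W: "vec.span W \<noteq> UNIV"
  shows "SCL G W (Suc t) = (\<Sum>j\<in>UNIV. SCL G (insert (column j G) W) t)"
proof -
  define S where "S = (\<lambda>W t. {xs. length xs = t \<and> vec.span (W \<union> colset G xs) = UNIV \<and>
      (xs = [] \<or> vec.span (W \<union> colset G (butlast xs)) \<noteq> UNIV)})"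
  have fin: "finite (S W' t)" for W' t
  proof -
    have "S W' t \<subseteq> {xs. set xs \<subseteq> UNIV \<and> length xs = t}" by (auto simp: S_def)
    moreover have "finite {xs. set xs \<subseteq> (UNIV::'n set) \<and> length xs = t}"
      by (rule finite_lists_length_eq) simp
    ultimately show ?thesis by (rule finite_subset)
  qed
  have eq: "S W (Suc t) = (\<Union>j. Cons j ` S (insert (column j G) W) t)"
  proof (rule set_eqI)
    fix xs
    show "xs \<in> S W (Suc t) \<longleftrightarrow> xs \<in> (\<Union>j. Cons j ` S (insert (column j G) W) t)"
    proof (cases xs)
      case Nil
      then show ?thesis by (auto simp: S_def)
    next
      case (Cons j ys)
      have c1: "W \<union> colset G (j # ys) = insert (column j G) W \<union> colset G ys"
        by (auto simp: colset_def)
      have c2: "W \<union> colset G (butlast (j # ys)) =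
          (if ys = [] then W else insert (column j G) W \<union> colset G (butlast ys))"
        by (auto simp: colset_def)
      have r: "j # ys \<in> (\<Union>j. Cons j ` S (insert (column j G) W) t) \<longleftrightarrow>
          ys \<in> S (insert (column j G) W) t" by blast
      have l: "j # ys \<in> S W (Suc t) \<longleftrightarrow> length ys = t \<and>
          vec.span (insert (column j G) W \<union> colset G ys) = UNIV \<and>
          vec.span (if ys = [] then W else insert (column j G) W \<union> colset G (butlast ys)) \<noteq> UNIV"
        unfolding S_def mem_Collect_eq c1 c2 by simp
      show ?thesis unfolding Cons r l using W by (cases "ys = []") (auto simp: S_def)
    qed
  qed
  have "card (S W (Suc t)) = (\<Sum>j\<in>UNIV. card (Cons j ` S (insert (column j G) W) t))"
    unfolding eq by (rule card_UN_disjoint) (auto simp: fin)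
  also have "\<dots> = (\<Sum>j\<in>UNIV. card (S (insert (column j G) W) t))"
    by (simp add: card_image)
  finally show ?thesis by (simp add: SCL_def S_def)
qed

lemma stop_count_SCL:
  fixes G :: "'a::field^'n::finite^'k::finite"
  assumes E: "vec.span ({}::('a^'k) set) \<noteq> UNIV"
  shows "stop_count G t = SCL G {} t"
proof (cases t)
  case 0
  have e1: "{js \<in> {..<t} \<rightarrow>\<^sub>E (UNIV :: 'n set).
       vec.span ((\<lambda>i. column (js i) G) ` {..<t}) = UNIV \<and>
       vec.span ((\<lambda>i. column (js i) G) ` {..<t - 1}) \<noteq> UNIV} = {}"
    using E 0 by auto
  have e2: "{xs. length xs = t \<and> vec.span ({} \<union> colset G xs) = UNIV \<and>
      (xs = [] \<or> vec.span ({} \<union> colset G (butlast xs)) \<noteq> UNIV)} = {}"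
    using E 0 by (auto simp: colset_def)
  show ?thesis unfolding stop_count_def SCL_def e1 e2 by simp
next
  case (Suc m)
  define A where "A = {js \<in> {..<t} \<rightarrow>\<^sub>E (UNIV :: 'n set).
       vec.span ((\<lambda>i. column (js i) G) ` {..<t}) = UNIV \<and>
       vec.span ((\<lambda>i. column (js i) G) ` {..<t - 1}) \<noteq> UNIV}"
  define B where "B = {xs. length xs = t \<and> vec.span ({} \<union> colset G xs) = UNIV \<and>
      (xs = [] \<or> vec.span ({} \<union> colset G (butlast xs)) \<noteq> UNIV)}"
  have c1: "colset G (map js [0..<t]) = (\<lambda>i. column (js i) G) ` {..<t}" for js
    by (auto simp: colset_def atLeast0LessThan)
  have bl: "butlast (map js [0..<t]) = map js [0..<t-1]" for js :: "nat \<Rightarrow> 'n"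
    using Suc by (simp add: map_butlast[symmetric])
  have c2: "colset G (butlast (map js [0..<t])) = (\<lambda>i. column (js i) G) ` {..<t-1}" for js
    unfolding bl by (auto simp: colset_def atLeast0LessThan)
  have "bij_betw (\<lambda>js. map js [0..<t]) A B"
  proof (rule bij_betw_byWitness[where f' = "\<lambda>xs. restrict (\<lambda>i. xs ! i) {..<t}"])
    show "\<forall>a\<in>A. restrict (\<lambda>i. map a [0..<t] ! i) {..<t} = a"
      by (auto simp: A_def PiE_def extensional_def restrict_def fun_eq_iff)
    show "\<forall>a'\<in>B. map (restrict (\<lambda>i. a' ! i) {..<t}) [0..<t] = a'"
      by (auto simp: B_def intro: nth_equalityI)
    show "(\<lambda>js. map js [0..<t]) ` A \<subseteq> B"
    proof
      fix xs assume "xs \<in> (\<lambda>js. map js [0..<t]) ` A"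
      then obtain js where js: "js \<in> A" and xs: "xs = map js [0..<t]" by blast
      have "length xs = t" using xs by simp
      moreover have "vec.span ({} \<union> colset G xs) = UNIV"
        using js unfolding xs A_def c1 Un_empty_left by blast
      moreover have "vec.span ({} \<union> colset G (butlast xs)) \<noteq> UNIV"
        using js unfolding xs A_def c2 Un_empty_left by blast
      ultimately show "xs \<in> B" unfolding B_def by blast
    qed
    show "(\<lambda>xs. restrict (\<lambda>i. xs ! i) {..<t}) ` B \<subseteq> A"
    proof
      fix js assume "js \<in> (\<lambda>xs. restrict (\<lambda>i. xs ! i) {..<t}) ` B"
      then obtain xs where xs: "xs \<in> B" and js: "js = restrict (\<lambda>i. xs ! i) {..<t}" by blast
      have m: "map js [0..<t] = xs" using xs js by (auto simp: B_def intro: nth_equalityI)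
      have pi: "js \<in> {..<t} \<rightarrow>\<^sub>E (UNIV :: 'n set)" using js by simp
      have i1: "(\<lambda>i. column (js i) G) ` {..<t} = colset G xs" using c1[of js] m by simp
      have i2: "(\<lambda>i. column (js i) G) ` {..<t - 1} = colset G (butlast xs)" using c2[of js] m by simp
      have ne: "xs \<noteq> []" using xs Suc by (auto simp: B_def)
      have "vec.span (colset G xs) = UNIV" "vec.span (colset G (butlast xs)) \<noteq> UNIV"
        using xs ne by (auto simp: B_def)
      then show "js \<in> A" unfolding A_def using pi i1 i2 by simp
    qed
  qed
  then have "card A = card B" by (rule bij_betw_same_card)
  then show ?thesis by (simp add: stop_count_def SCL_def A_def B_def)
qed



fun sq :: "nat \<Rightarrow> (nat \<Rightarrow> real) \<Rightarrow> nat \<Rightarrow> nat \<Rightarrow> real" where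
  "sq k p d 0 = (if k \<le> d then 1 else 0)"
| "sq k p d (Suc t) = (if k \<le> d then 0 else p d * sq k p d t + (1 - p d) * sq k p (Suc d) t)"

lemma sq_nonneg:
  assumes "\<And>d. d < k \<Longrightarrow> 0 \<le> p d \<and> p d \<le> 1"
  shows "0 \<le> sq k p d t"
  using assms by (induction t arbitrary: d) auto

lemma sq_sums:
  assumes p: "\<And>d. d < k \<Longrightarrow> 0 \<le> p d \<and> p d < 1" and "d \<le> k"
  shows "sq k p d sums 1 \<and> (\<lambda>t. real t * sq k p d t) sums (\<Sum>i=d..<k. 1 / (1 - p i))"
  using \<open>d \<le> k\<close>
proof (induction d rule: inc_induct)
  case base
  have e: "sq k p k = (\<lambda>t. if t = 0 then 1 else 0)"
    by (rule ext) (case_tac t, auto)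
  have "(\<lambda>t. real t * sq k p k t) = (\<lambda>t. 0)" unfolding e by (rule ext) auto
  then show ?case unfolding e by (simp add: sums_single[of 0 "\<lambda>_. 1::real", simplified])
next
  case (step d)
  have nn: "\<And>d t. 0 \<le> sq k p d t" using p by (intro sq_nonneg) (simp add: less_imp_le)
  have "sq k p d sums 1 \<and> (\<lambda>t. real t * sq k p d t) sums ((\<Sum>i=Suc d..<k. 1 / (1 - p i)) + 1 / (1 - p d))"
    by (rule step_sums[where y = "sq k p (Suc d)"]) (use p step in \<open>auto simp: nn\<close>)
  moreover have "(\<Sum>i=d..<k. 1 / (1 - p i)) = 1 / (1 - p d) + (\<Sum>i=Suc d..<k. 1 / (1 - p i))"
    using step by (simp add: sum.atLeast_Suc_lessThan)
  ultimately show ?case by (simp add: add.commute)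
qed

lemma span_UNIV_iff:
  "vec.span (W::('a::field^'k) set) = UNIV \<longleftrightarrow> vec.dim W = CARD('k)"
  by (metis vec.dim_eq_full vec.dim_span vec.span_UNIV vec_dim_card)

lemma SCL_eq:
  fixes G :: "'a::field^'n::finite^'k::finite"
  assumes m: "\<And>W::('a^'k) set. real (card {j. column j G \<in> vec.span W}) = real CARD('n) * p (vec.dim W)"
  shows "real (SCL G W t) = real CARD('n) ^ t * sq CARD('k) p (vec.dim W) t"
proof (induction t arbitrary: W)
  case 0
  show ?case
  proof (cases "vec.span W = UNIV")
    case True
    then have "vec.dim W = CARD('k)" using span_UNIV_iff[of W] by simp
    then show ?thesis using SCL_full[OF True, of G 0] by simp
  next
    case False
    then have dk: "\<not> CARD('k) \<le> vec.dim W"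
      using span_UNIV_iff[of W] dim_subset_UNIV_cart_gen[of W] by linarith
    have "{xs. length xs = 0 \<and> vec.span (W \<union> colset G xs) = UNIV \<and>
      (xs = [] \<or> vec.span (W \<union> colset G (butlast xs)) \<noteq> UNIV)} = {}"
      using False by (auto simp: colset_def)
    then have "SCL G W 0 = 0" unfolding SCL_def by simp
    then show ?thesis using dk by simp
  qed
next
  case (Suc t)
  show ?case
  proof (cases "vec.span W = UNIV")
    case True
    then have "vec.dim W = CARD('k)" using span_UNIV_iff[of W] by simp
    then show ?thesis using SCL_full[OF True, of G "Suc t"] by simp
  next
    case False
    define d where "d = vec.dim W"
    have dk: "d < CARD('k)" using False span_UNIV_iff[of W] dim_subset_UNIV_cart_gen[of W]
      unfolding d_def by linarith
    define J where "J = {j. column j G \<in> vec.span W}"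
    define A where "A = real CARD('n) ^ t * sq CARD('k) p d t"
    define B where "B = real CARD('n) ^ t * sq CARD('k) p (Suc d) t"
    have ins: "real (SCL G (insert (column j G) W) t) = (if j \<in> J then A else B)" for j
    proof (cases "j \<in> J")
      case True
      then have "vec.dim (insert (column j G) W) = d" by (simp add: vec.dim_insert J_def d_def)
      then show ?thesis using Suc[of "insert (column j G) W"] True by (simp add: A_def)
    next
      case False
      then have "vec.dim (insert (column j G) W) = Suc d" by (simp add: vec.dim_insert J_def d_def)
      then show ?thesis using Suc[of "insert (column j G) W"] False by (simp add: B_def)
    qed
    have "real (SCL G W (Suc t)) = (\<Sum>j\<in>UNIV. real (SCL G (insert (column j G) W) t))"
      by (simp only: SCL_rec[OF False] of_nat_sum)
    also have "\<dots> = (\<Sum>j\<in>UNIV. (if j \<in> J then A else B))"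
      by (simp only: ins)
    also have "\<dots> = real (card J) * A + real (card (UNIV - J)) * B"
      by (subst sum.If_cases) (simp_all add: Compl_eq_Diff_UNIV)
    also have "real (card (UNIV - J)) = real CARD('n) - real (card J)"
      by (simp add: card_Diff_subset of_nat_diff card_mono)
    also have "real (card J) = real CARD('n) * p d" using m[of W] by (simp add: J_def d_def)
    finally have "real (SCL G W (Suc t)) = real CARD('n) * p d * A + (real CARD('n) - real CARD('n) * p d) * B" .
    moreover have sqe: "sq CARD('k) p d (Suc t) = p d * sq CARD('k) p d t + (1 - p d) * sq CARD('k) p (Suc d) t"
      using dk by simp
    moreover have "real CARD('n) ^ Suc t * sq CARD('k) p d (Suc t) =
        real CARD('n) * p d * A + (real CARD('n) - real CARD('n) * p d) * B"
      unfolding sqe A_def B_def by (simp add: algebra_simps)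
    ultimately show ?thesis unfolding d_def by simp
  qed
qed

theorem mainTheorem2:
  fixes G :: "'a::{finite,field}^'n::finite^'k::finite"
    and q k n :: nat
  assumes "CARD('a) = q"
    and "k = CARD('k)" and "k \<ge> 2"
    and "n = CARD('n)" and "n = (q ^ k - 1) div (q - 1)"
    and "simplex_generator G"
  shows "expected_draws G =
    real k + (\<Sum>i = 1..k. (real q ^ (i - 1) - 1) / (real q ^ k - real q ^ (i - 1)))"
proof -
  note qdef = assms(1) and kdef = assms(2) and ndef = assms(4) and sg = assms(6)
  have q2: "q \<ge> 2"
  proof -
    have "card {0::'a, 1} = 2" by simp
    moreover have "card {0::'a, 1} \<le> CARD('a)" by (rule card_mono) auto
    ultimately show ?thesis using qdef by simp
  qed
  have cnt: "(q - 1) * card {j. column j G \<in> vec.span W} = q ^ vec.dim W - 1" for W :: "('a^'k) set"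
    using col_count[OF sg, of W] card_span_pow[of W] qdef by simp
  have nq: "(q - 1) * n = q ^ k - 1"
    using cnt[of UNIV] ndef kdef unfolding vec_dim_card by simp
  have npos: "n > 0" using ndef by simp
  define p where "p = (\<lambda>d::nat. (real q ^ d - 1) / (real q ^ k - 1))"
  have qk1: "real q ^ k - 1 > 0"
  proof -
    have "1 < real q ^ k" using q2 assms(3) by (intro one_less_power) auto
    then show ?thesis by simp
  qed
  have realcnt: "(real q - 1) * real m = real q ^ d - 1" if "(q - 1) * m = q ^ d - 1" for m d
  proof -
    have "real ((q - 1) * m) = real (q ^ d - 1)" using that by simp
    moreover have "q ^ d \<ge> 1" using q2 by simp
    ultimately show ?thesis using q2 by (simp add: of_nat_diff)
  qed
  have rn: "(real q - 1) * real n = real q ^ k - 1" using realcnt[OF nq] .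
  have mhyp: "real (card {j. column j G \<in> vec.span W}) = real CARD('n) * p (vec.dim W)"
    for W :: "('a^'k) set"
  proof -
    have r: "(real q - 1) * real (card {j. column j G \<in> vec.span W}) = real q ^ vec.dim W - 1"
      using realcnt[OF cnt[of W]] .
    have q1: "real q - 1 > 0" using q2 by simp
    have "real CARD('n) * p (vec.dim W) = real n * (real q ^ vec.dim W - 1) / (real q ^ k - 1)"
      by (simp add: p_def ndef)
    also have "\<dots> = real n * (real q ^ vec.dim W - 1) / ((real q - 1) * real n)"
      by (simp only: rn)
    also have "\<dots> = (real q ^ vec.dim W - 1) / (real q - 1)"
      using npos q1 by simp
    also have "\<dots> = real (card {j. column j G \<in> vec.span W})"
      using r q1 by (simp add: divide_eq_eq mult.commute)
    finally show ?thesis by simp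
  qed
  have pb: "0 \<le> p d \<and> p d < 1" if "d < k" for d
  proof -
    have "real q ^ d < real q ^ k" using q2 that by (intro power_strict_increasing) auto
    moreover have "real q ^ d \<ge> 1" using q2 by simp
    ultimately show ?thesis using qk1 unfolding p_def by (simp add: divide_simps)
  qed
  have E: "vec.span ({}::('a^'k) set) \<noteq> UNIV"
    using span_UNIV_iff[of "{}::('a^'k) set"] by simp
  have trm: "real t * (real (stop_count G t) / real CARD('n) ^ t) = real t * sq k p 0 t" for t
    using SCL_eq[of G p "{}" t, OF mhyp] stop_count_SCL[OF E, of G t] npos ndef kdef by simp
  have "(\<lambda>t. real t * sq k p 0 t) sums (\<Sum>i=0..<k. 1 / (1 - p i))"
    using sq_sums[of k p 0] pb by simp
  then have ED: "expected_draws G = (\<Sum>i<k. 1 / (1 - p i))"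
    unfolding expected_draws_def trm by (simp add: sums_iff atLeast0LessThan)
  have tm: "1 / (1 - p i) = 1 + (real q ^ i - 1) / (real q ^ k - real q ^ i)" if "i < k" for i
  proof -
    have "real q ^ i < real q ^ k" using q2 that by (intro power_strict_increasing) auto
    then show ?thesis using qk1 unfolding p_def by (simp add: field_simps)
  qed
  have "(\<Sum>i = 1..k. (real q ^ (i - 1) - 1) / (real q ^ k - real q ^ (i - 1)))
      = (\<Sum>i<k. (real q ^ i - 1) / (real q ^ k - real q ^ i))"
    by (simp add: sum.atLeast1_atMost_eq)
  moreover have "(\<Sum>i<k. 1 / (1 - p i)) = (\<Sum>i<k. 1 + (real q ^ i - 1) / (real q ^ k - real q ^ i))"
    using tm by (intro sum.cong) auto
  ultimately show ?thesis unfolding ED by (simp add: sum.distrib)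
qed


end
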